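(* Let $\mu<0$, $k=e^{-\mu}$, $g_c=k/(1+k)^2$, $x=X(g_c)$ with $X(g)=\frac{1-\sqrt{1-4g}}2$ (so $0<x<1/2$). Let $p(n)=x^n(1-x)$, $n\ge0$, a subcritical offspring distribution with mean $m=x/(1-x)<1$, and let $\hat\lambda$ be the associated Kesten (size-biased) tree, i.e. the Borel probability measure on $\mathcal T$ such that for every $T_0\in\mathcal T_{\rm fin}$ of height $r$, $$\hat\lambda\big(\mathcal B_{1/r}(T_0)\big)=\sum_{i\in D_r(T_0)}\ \prod_{v\in\bigcup_{s=1}^{r-1}D_s(T_0)\setminus V(\omega(i))}p(\sigma(v)-1)\prod_{v\in V(\omega(i))\setminus\{i\}}p^s(\sigma(v)-2),$$ where $\omega(i)$ is the path from the height-1 vertex to $i$, $\sigma(v)$ the degree of $v$, and $p^s(n)=p(n+1)/m$. Then $\nu^{(\mu)}=\hat\lambda$.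
   Context: Rooted planar trees (root of degree 1); $D_r(T)$ = vertices at height $r$; the degree $\sigma(v)$ of a non-root vertex $v$ equals its number of offspring plus one. $\mathcal B_{1/r}(T_0)=\{T: B_r(T)=T_0\}$ where $B_r(T)$ is the subtree spanned by vertices of height $\le r$; balls determine Borel probability measures on $\mathcal T$. $\nu^{(\mu)}$ is the weak limit as $N\to\infty$ of $\nu_N^{(\mu)}(T)=e^{-\mu h(T)}/Z_N^{(\mu)}$ on trees of size $N$ (number of edges), $Z_N^{(\mu)}=\sum_{|T|=N}e^{-\mu h(T)}$; it is characterized by $\nu^{(\mu)}(\mathcal B_{1/r}(T_0))=K k^{r-1}g_c^{|T_0|-K}X(g_c)^{K-1}$, $K=|D_r(T_0)|$. *)

theory Defs
  imports "HOL-Probability.Probability"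
begin

text \<open>Rooted planar trees in Ulam-Harris encoding: vertices are words over nat,
  the root is the empty word, the children of v are the words v @ [i],
  ordered by i. The root has degree 1, i.e. its only child is [0].\<close>

definition is_tree :: "nat list set \<Rightarrow> bool" where
  "is_tree T \<longleftrightarrow>
     [] \<in> T \<and> [0] \<in> T \<and> [1] \<notin> T
     \<and> (\<forall>v\<in>T. \<forall>n. take n v \<in> T)
     \<and> (\<forall>v i j. v @ [i] \<in> T \<longrightarrow> j < i \<longrightarrow> v @ [j] \<in> T)
     \<and> (\<forall>v\<in>T. finite {i. v @ [i] \<in> T})"

definition trees :: "nat list set set" where
  "trees = {T. is_tree T}"

definition fin_trees :: "nat list set set" where
  "fin_trees = {T. is_tree T \<and> finite T}"

definition offspring :: "nat list set \<Rightarrow> nat list \<Rightarrow> nat" where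
  "offspring T v = card {i. v @ [i] \<in> T}"

definition deg :: "nat list set \<Rightarrow> nat list \<Rightarrow> nat" where
  "deg T v = offspring T v + 1"

definition height :: "nat list set \<Rightarrow> nat" where
  "height T = Max (length ` T)"

definition tsize :: "nat list set \<Rightarrow> nat" where
  "tsize T = card T - 1"

definition D :: "nat \<Rightarrow> nat list set \<Rightarrow> nat list set" where
  "D r T = {v \<in> T. length v = r}"

definition Bt :: "nat \<Rightarrow> nat list set \<Rightarrow> nat list set" where
  "Bt r T = {v \<in> T. length v \<le> r}"

definition ball_tree :: "nat \<Rightarrow> nat list set \<Rightarrow> nat list set set" where
  "ball_tree r T0 = {T \<in> trees. Bt r T = T0}"

text \<open>Borel sigma-algebra on the space of trees: generated by the balls
  (the balls form a countable base of the ball-metric topology)\<close>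
definition tree_space :: "nat list set measure" where
  "tree_space = sigma trees {ball_tree r T0 | r T0. T0 \<in> fin_trees}"

definition path_V :: "nat list \<Rightarrow> nat list set" where
  "path_V i = {take n i | n. 1 \<le> n \<and> n \<le> length i}"

definition Xfun :: "real \<Rightarrow> real" where
  "Xfun g = (1 - sqrt (1 - 4 * g)) / 2"

definition kpar :: "real \<Rightarrow> real" where
  "kpar \<mu> = exp (- \<mu>)"

definition gcrit :: "real \<Rightarrow> real" where
  "gcrit \<mu> = kpar \<mu> / (1 + kpar \<mu>)\<^sup>2"

definition xpar :: "real \<Rightarrow> real" where
  "xpar \<mu> = Xfun (gcrit \<mu>)"

definition pdist :: "real \<Rightarrow> nat \<Rightarrow> real" where
  "pdist \<mu> n = xpar \<mu> ^ n * (1 - xpar \<mu>)"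

definition mpar :: "real \<Rightarrow> real" where
  "mpar \<mu> = xpar \<mu> / (1 - xpar \<mu>)"

definition psdist :: "real \<Rightarrow> nat \<Rightarrow> real" where
  "psdist \<mu> n = pdist \<mu> (n + 1) / mpar \<mu>"

definition nu_ball :: "real \<Rightarrow> nat \<Rightarrow> nat list set \<Rightarrow> real" where
  "nu_ball \<mu> r T0 = (let K = card (D r T0) in
     real K * kpar \<mu> ^ (r - 1) * gcrit \<mu> ^ (tsize T0 - K) * xpar \<mu> ^ (K - 1))"

definition kesten_ball :: "real \<Rightarrow> nat \<Rightarrow> nat list set \<Rightarrow> real" where
  "kesten_ball \<mu> r T0 =
     (\<Sum>i\<in>D r T0.
        (\<Prod>v\<in>(\<Union>s\<in>{1..r-1}. D s T0) - path_V i. pdist \<mu> (deg T0 v - 1))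
      * (\<Prod>v\<in>path_V i - {i}. psdist \<mu> (deg T0 v - 2)))"

end

theory Submission
  imports Defs
begin

lemma tree_take: "is_tree T \<Longrightarrow> v \<in> T \<Longrightarrow> take n v \<in> T" by (simp add: is_tree_def)
lemma tree_nil: "is_tree T \<Longrightarrow> [] \<in> T" by (simp add: is_tree_def)
lemma tree_0: "is_tree T \<Longrightarrow> [0] \<in> T" by (simp add: is_tree_def)
lemma tree_not1: "is_tree T \<Longrightarrow> [1] \<notin> T" by (simp add: is_tree_def)
lemma tree_fin_children: "is_tree T \<Longrightarrow> v \<in> T \<Longrightarrow> finite {i. v @ [i] \<in> T}"
  by (simp add: is_tree_def)
lemma tree_sib: "is_tree T \<Longrightarrow> v @ [i] \<in> T \<Longrightarrow> j < i \<Longrightarrow> v @ [j] \<in> T"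
  unfolding is_tree_def by blast

lemma tree_len1: assumes "is_tree T" "v \<in> T" "length v = 1" shows "v = [0]"
proof -
  obtain a where v: "v = [a]" using assms(3) by (cases v) auto
  have "a = 0"
  proof (rule ccontr)
    assume "a \<noteq> 0"
    hence "[1] \<in> T"
    proof (cases "a = 1")
      case False
      with \<open>a \<noteq> 0\<close> have "1 < a" by auto
      then show ?thesis using tree_sib[OF assms(1), of "[]" a 1] assms(2) v by simp
    qed (use assms(2) v in simp)
    then show False using tree_not1[OF assms(1)] by simp
  qed
  then show ?thesis using v by simp
qed

lemma finite_Bt: assumes "is_tree T" shows "finite (Bt n T)"
proof (induction n)
  case 0
  have "Bt 0 T \<subseteq> {[]}" by (auto simp: Bt_def)
  then show ?case using finite_subset by blast
next
  case (Suc n)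
  have "Bt (Suc n) T \<subseteq> Bt n T \<union> (\<Union>v\<in>Bt n T. (\<lambda>j. v @ [j]) ` {j. v @ [j] \<in> T})"
  proof
    fix w assume w: "w \<in> Bt (Suc n) T"
    show "w \<in> Bt n T \<union> (\<Union>v\<in>Bt n T. (\<lambda>j. v @ [j]) ` {j. v @ [j] \<in> T})"
    proof (cases "length w \<le> n")
      case True then show ?thesis using w by (auto simp: Bt_def)
    next
      case False
      then have "w \<noteq> []" by auto
      then have eq: "w = butlast w @ [last w]" by simp
      have "butlast w \<in> T" using tree_take[OF assms, of w "length w - 1"] w
        by (simp add: Bt_def butlast_conv_take)
      moreover have "length (butlast w) \<le> n" using w by (auto simp: Bt_def)
      moreover have "last w \<in> {j. butlast w @ [j] \<in> T}" using eq w by (auto simp: Bt_def)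
      ultimately have "w \<in> (\<lambda>j. butlast w @ [j]) ` {j. butlast w @ [j] \<in> T}
          \<and> butlast w \<in> Bt n T"
        using eq by (auto simp: Bt_def intro: rev_image_eqI)
      then show ?thesis by blast
    qed
  qed
  moreover have "finite (\<Union>v\<in>Bt n T. (\<lambda>j. v @ [j]) ` {j. v @ [j] \<in> T})"
    using Suc.IH tree_fin_children[OF assms] by (auto simp: Bt_def)
  ultimately show ?case using Suc.IH finite_subset by blast
qed

lemma Bt_tree: assumes "is_tree T" "1 \<le> n" shows "is_tree (Bt n T)"
proof -
  have "finite {i. v @ [i] \<in> Bt n T}" if "v \<in> Bt n T" for v
    using tree_fin_children[OF assms(1), of v] that by (auto simp: Bt_def intro: finite_subset)
  moreover have "[] \<in> Bt n T" "[0] \<in> Bt n T" "[1] \<notin> Bt n T"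
    using assms tree_nil tree_0 tree_not1 by (auto simp: Bt_def)
  moreover have "\<forall>v\<in>Bt n T. \<forall>m. take m v \<in> Bt n T"
    using tree_take[OF assms(1)] by (auto simp: Bt_def)
  moreover have "\<forall>v i j. v @ [i] \<in> Bt n T \<longrightarrow> j < i \<longrightarrow> v @ [j] \<in> Bt n T"
    using tree_sib[OF assms(1)] by (auto simp: Bt_def)
  ultimately show ?thesis unfolding is_tree_def by blast
qed

lemma Bt_Bt: "h \<le> h' \<Longrightarrow> Bt h (Bt h' T) = Bt h T" by (auto simp: Bt_def)

lemma fin_height: assumes "is_tree T" "finite T"
  shows "\<And>v. v \<in> T \<Longrightarrow> length v \<le> height T" "\<exists>v\<in>T. length v = height T"
    "1 \<le> height T"
proof -
  show "\<And>v. v \<in> T \<Longrightarrow> length v \<le> height T" using assms by (auto simp: height_def)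
  have "T \<noteq> {}" using tree_nil[OF assms(1)] by auto
  then show "\<exists>v\<in>T. length v = height T" using assms unfolding height_def
    by (metis (mono_tags, lifting) Max_in finite_imageI image_iff image_is_empty)
  show "1 \<le> height T" using assms tree_0[OF assms(1)] unfolding height_def
    by (metis Max_ge finite_imageI image_eqI length_Cons list.size(3) One_nat_def)
qed


lemma ball_Int: "h \<le> h' \<Longrightarrow> ball_tree h T0 \<inter> ball_tree h' T1 =
   (if Bt h T1 = T0 then ball_tree h' T1 else {})"
proof -
  assume h: "h \<le> h'"
  have "Bt h T = Bt h T1" if "Bt h' T = T1" for T using Bt_Bt[OF h, of T] that by simp
  then show ?thesis unfolding ball_tree_def by auto
qed

lemma ball_trees: "ball_tree 1 {[],[0]} = trees"
proof -
  have "Bt 1 T = {[],[0]}" if "is_tree T" for T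
  proof
    show "Bt 1 T \<subseteq> {[], [0]}"
    proof
      fix v assume "v \<in> Bt 1 T"
      then have "v \<in> T" "length v \<le> 1" by (auto simp: Bt_def)
      then have "v = [] \<or> length v = 1" by (cases v) auto
      then show "v \<in> {[],[0]}" using tree_len1[OF that \<open>v \<in> T\<close>] by auto
    qed
    show "{[], [0]} \<subseteq> Bt 1 T" using tree_nil[OF that] tree_0[OF that] by (auto simp: Bt_def)
  qed
  then show ?thesis unfolding ball_tree_def trees_def by auto
qed

lemma fin01: "{[],[0]} \<in> fin_trees" "height {[],[0::nat]} = 1"
proof -
  show "{[],[0]} \<in> fin_trees" unfolding fin_trees_def is_tree_def
    by (auto simp: take_Cons' less_Suc_eq_0_disj)
  show "height {[],[0::nat]} = 1" by (simp add: height_def)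
qed

definition E0 :: "nat list set set set" where
  "E0 = {ball_tree (height T0) T0 | T0. T0 \<in> fin_trees} \<union> {{}}"
definition G0 :: "nat list set set set" where
  "G0 = {ball_tree r T0 | r T0. T0 \<in> fin_trees}"

lemma E0_Pow: "E0 \<subseteq> Pow trees" by (auto simp: E0_def ball_tree_def)
lemma G0_Pow: "G0 \<subseteq> Pow trees" by (auto simp: G0_def ball_tree_def)

lemma E0_Int: "Int_stable E0"
proof -
  have *: "ball_tree h T0 \<inter> ball_tree h' T1 \<in> E0"
    if "ball_tree h T0 \<in> E0" "ball_tree h' T1 \<in> E0" "h \<le> h'" for h h' T0 T1
    using ball_Int[OF that(3), of T0 T1] that by (auto simp: E0_def)
  show ?thesis unfolding Int_stable_def
  proof (intro ballI)
    fix a b assume a: "a \<in> E0" and b: "b \<in> E0"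
    show "a \<inter> b \<in> E0"
    proof (cases "a = {} \<or> b = {}")
      case True then show ?thesis by (auto simp: E0_def)
    next
      case False
      then obtain T0 T1 where "a = ball_tree (height T0) T0" "b = ball_tree (height T1) T1"
        using a b by (auto simp: E0_def)
      then show ?thesis using *[of "height T0" T0 "height T1" T1] *[of "height T1" T1 "height T0" T0] a b
        by (cases "height T0 \<le> height T1") (auto simp: Int_commute)
    qed
  qed
qed

lemma ball_single:
  assumes T0: "T0 \<in> fin_trees" and r: "height T0 < r"
  shows "ball_tree r T0 = {T0}"
    "{T0} = ball_tree (height T0) T0 -
        \<Union>((\<lambda>T1. ball_tree (height T1) T1) ` {T1 \<in> fin_trees. height T1 = Suc (height T0)})"
proof -
  let ?h = "height T0"
  have tr: "is_tree T0" "finite T0" using T0 by (auto simp: fin_trees_def)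
  note H = fin_height[OF tr]
  have BT0: "Bt n T0 = T0" if "?h \<le> n" for n using H(1) that by (force simp: Bt_def)
  have T0t: "T0 \<in> trees" using tr by (simp add: trees_def)
  have eqT0: "T = T0" if "T \<in> ball_tree ?h T0" "\<forall>w\<in>T. length w \<le> ?h" for T
    using that unfolding ball_tree_def Bt_def by auto
  show "ball_tree r T0 = {T0}"
  proof
    show "{T0} \<subseteq> ball_tree r T0" using BT0[of r] r T0t by (auto simp: ball_tree_def)
    show "ball_tree r T0 \<subseteq> {T0}"
    proof
      fix T assume T: "T \<in> ball_tree r T0"
      then have tT: "is_tree T" and bT: "Bt r T = T0" by (auto simp: ball_tree_def trees_def)
      have "\<forall>w\<in>T. length w \<le> ?h"
      proof (rule ccontr)
        assume "\<not> ?thesis"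
        then obtain w where w: "w \<in> T" "?h < length w" by auto
        have "take (Suc ?h) w \<in> Bt r T" using tree_take[OF tT w(1)] w(2) r by (auto simp: Bt_def)
        then have "take (Suc ?h) w \<in> T0" using bT by simp
        then show False using H(1) w(2) by fastforce
      qed
      moreover have "T \<in> ball_tree ?h T0" using T Bt_Bt[of ?h r T] r BT0[of ?h]
        by (auto simp: ball_tree_def)
      ultimately show "T \<in> {T0}" using eqT0 by auto
    qed
  qed
  show "{T0} = ball_tree ?h T0 -
        \<Union>((\<lambda>T1. ball_tree (height T1) T1) ` {T1 \<in> fin_trees. height T1 = Suc ?h})"
  proof
    show "{T0} \<subseteq> ball_tree ?h T0 -
        \<Union>((\<lambda>T1. ball_tree (height T1) T1) ` {T1 \<in> fin_trees. height T1 = Suc ?h})"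
    proof -
      have "T0 \<in> ball_tree ?h T0" using BT0 T0t by (auto simp: ball_tree_def)
      moreover have "T0 \<notin> ball_tree (height T1) T1" if "T1 \<in> fin_trees" "height T1 = Suc ?h" for T1
      proof
        assume "T0 \<in> ball_tree (height T1) T1"
        then have bb: "Bt (height T1) T0 = T1" by (simp add: ball_tree_def)
        have t1: "is_tree T1" "finite T1" using that(1) by (auto simp: fin_trees_def)
        obtain v where v: "v \<in> T1" "length v = height T1"
          using fin_height(2)[OF t1] by blast
        have "v \<in> T0" using bb v(1) by (auto simp: Bt_def)
        then show False using H(1)[of v] v(2) that(2) by simp
      qed
      ultimately show ?thesis by auto
    qed
    show "ball_tree ?h T0 -
        \<Union>((\<lambda>T1. ball_tree (height T1) T1) ` {T1 \<in> fin_trees. height T1 = Suc ?h}) \<subseteq> {T0}"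
    proof
      fix T assume T: "T \<in> ball_tree ?h T0 -
        \<Union>((\<lambda>T1. ball_tree (height T1) T1) ` {T1 \<in> fin_trees. height T1 = Suc ?h})"
      show "T \<in> {T0}"
      proof (rule ccontr)
        assume "T \<notin> {T0}"
        then obtain w where w: "w \<in> T" "?h < length w" using eqT0 T by force
        have tT: "is_tree T" using T by (auto simp: ball_tree_def trees_def)
        let ?T1 = "Bt (Suc ?h) T"
        have t1: "is_tree ?T1" "finite ?T1" using Bt_tree[OF tT] finite_Bt[OF tT] by auto
        have "take (Suc ?h) w \<in> ?T1" using tree_take[OF tT w(1)] w(2) by (auto simp: Bt_def)
        then have ge: "Suc ?h \<le> height ?T1" using fin_height(1)[OF t1, of "take (Suc ?h) w"] w(2)
          by simp
        obtain u where u: "u \<in> ?T1" "length u = height ?T1" using fin_height(2)[OF t1] by blast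
        then have "height ?T1 \<le> Suc ?h" unfolding Bt_def by simp
        with ge have "height ?T1 = Suc ?h" by simp
        moreover have "T \<in> ball_tree (height ?T1) ?T1" using T calculation
          by (auto simp: ball_tree_def)
        moreover have "?T1 \<in> {T1 \<in> fin_trees. height T1 = Suc ?h}"
          using t1 calculation(1) by (simp add: fin_trees_def)
        ultimately show False using T by blast
      qed
    qed
  qed
qed

lemma countable_fin_trees: "countable fin_trees"
  by (rule countable_subset[OF _ countable_Collect_finite]) (auto simp: fin_trees_def)

lemma sigma_eq: "sigma_sets trees G0 = sigma_sets trees E0"
proof (rule sigma_sets_eqI)
  interpret S: sigma_algebra trees "sigma_sets trees E0"
    by (rule sigma_algebra_sigma_sets[OF E0_Pow])
  fix a assume "a \<in> G0"
  then obtain r T0 where a: "a = ball_tree r T0" and T0: "T0 \<in> fin_trees" by (auto simp: G0_def)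
  have tr: "is_tree T0" "finite T0" using T0 by (auto simp: fin_trees_def)
  note H = fin_height[OF tr]
  consider "r = height T0" | "r < height T0" | "height T0 < r" by linarith
  then show "a \<in> sigma_sets trees E0"
  proof cases
    case 1 then show ?thesis using a T0 by (auto simp: E0_def)
  next
    case 2
    obtain v where v: "v \<in> T0" "length v = height T0" using H(2) by auto
    have "a = {}" using a v 2 by (auto simp: ball_tree_def Bt_def)
    then show ?thesis by (simp add: sigma_sets.Empty)
  next
    case 3
    have "ball_tree (height T0) T0 \<in> sigma_sets trees E0" using T0 by (auto simp: E0_def)
    moreover have "\<Union>((\<lambda>T1. ball_tree (height T1) T1) ` {T1 \<in> fin_trees. height T1 = Suc (height T0)})
       \<in> sigma_sets trees E0"
    proof (rule S.countable_Union)
      show "countable ((\<lambda>T1. ball_tree (height T1) T1) ` {T1 \<in> fin_trees. height T1 = Suc (height T0)})"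
        by (rule countable_image, rule countable_subset[OF _ countable_fin_trees]) blast
      show "(\<lambda>T1. ball_tree (height T1) T1) ` {T1 \<in> fin_trees. height T1 = Suc (height T0)}
          \<subseteq> sigma_sets trees E0"
      proof
        fix X assume "X \<in> (\<lambda>T1. ball_tree (height T1) T1) ` {T1 \<in> fin_trees. height T1 = Suc (height T0)}"
        then have "X \<in> E0" unfolding E0_def by blast
        then show "X \<in> sigma_sets trees E0" by (rule sigma_sets.Basic)
      qed
    qed
    ultimately show ?thesis using ball_single[OF T0 3] a by auto
  qed
next
  fix b assume "b \<in> E0"
  then consider "b = {}" | T0 where "T0 \<in> fin_trees" "b = ball_tree (height T0) T0"
    unfolding E0_def by blast
  then show "b \<in> sigma_sets trees G0"
  proof cases
    case 1 then show ?thesis by (simp add: sigma_sets.Empty)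
  next
    case 2
    then have "b \<in> G0" unfolding G0_def by blast
    then show ?thesis by (rule sigma_sets.Basic)
  qed
qed


lemma len_lt2: assumes "is_tree T" shows "{w \<in> T. length w < 2} = {[],[0]}"
proof
  show "{w \<in> T. length w < 2} \<subseteq> {[], [0]}"
  proof
    fix w assume w: "w \<in> {w \<in> T. length w < 2}"
    then have "w = [] \<or> length w = 1" by (cases w) auto
    then show "w \<in> {[],[0]}" using tree_len1[OF assms] w by auto
  qed
  show "{[], [0]} \<subseteq> {w \<in> T. length w < 2}" using tree_nil[OF assms] tree_0[OF assms] by auto
qed

lemma sum_off: assumes "is_tree T" "finite T"
  shows "sum (offspring T) {v \<in> T. 1 \<le> length v \<and> length v < height T} = card T - 2"
proof -
  let ?r = "height T"
  let ?I = "{v \<in> T. 1 \<le> length v \<and> length v < ?r}"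
  let ?A = "\<lambda>v. (\<lambda>j. v @ [j]) ` {j. v @ [j] \<in> T}"
  note H = fin_height[OF assms]
  have S: "{w \<in> T. 2 \<le> length w} = (\<Union>v\<in>?I. ?A v)"
  proof
    show "{w \<in> T. 2 \<le> length w} \<subseteq> (\<Union>v\<in>?I. ?A v)"
    proof
      fix w assume w: "w \<in> {w \<in> T. 2 \<le> length w}"
      then have "w \<noteq> []" by auto
      then have eq: "w = butlast w @ [last w]" by simp
      have bt: "butlast w \<in> T" using tree_take[OF assms(1), of w "length w - 1"] w
        by (simp add: butlast_conv_take)
      have "length w \<le> ?r" using H(1) w by auto
      then have "butlast w \<in> ?I" using bt w by auto
      moreover have "w \<in> ?A (butlast w)" using eq w by (auto intro: rev_image_eqI)
      ultimately show "w \<in> (\<Union>v\<in>?I. ?A v)" by blast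
    qed
    show "(\<Union>v\<in>?I. ?A v) \<subseteq> {w \<in> T. 2 \<le> length w}" by auto
  qed
  have fI: "finite ?I" using assms(2) by simp
  have "card (\<Union>v\<in>?I. ?A v) = (\<Sum>v\<in>?I. card (?A v))"
    by (rule card_UN_disjoint[OF fI]) (use tree_fin_children[OF assms(1)] in auto)
  also have "\<dots> = sum (offspring T) ?I"
    by (rule sum.cong) (auto simp: offspring_def card_image inj_on_def)
  finally have c1: "card {w \<in> T. 2 \<le> length w} = sum (offspring T) ?I" using S by simp
  have "T = {w \<in> T. length w < 2} \<union> {w \<in> T. 2 \<le> length w}" by auto
  then have "card T = card {w \<in> T. length w < 2} + card {w \<in> T. 2 \<le> length w}"
    using assms(2) by (metis (no_types, lifting) card_Un_disjoint disjoint_iff finite_Un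
        mem_Collect_eq not_le)
  then have "card T = 2 + card {w \<in> T. 2 \<le> length w}" using len_lt2[OF assms(1)] by simp
  then show ?thesis using c1 by simp
qed

lemma card_I: assumes "is_tree T" "finite T"
  shows "card {v \<in> T. 1 \<le> length v \<and> length v < height T} + card (D (height T) T) + 1 = card T"
    "1 \<le> card (D (height T) T)"
proof -
  let ?r = "height T"
  note H = fin_height[OF assms]
  let ?J = "{v \<in> T. 1 \<le> length v}"
  have TJ: "T = insert [] ?J" using tree_nil[OF assms(1)] by (auto simp: Suc_le_eq)
  have cJ: "card T = card ?J + 1" using assms(2) by (subst TJ) simp
  have DJ: "D ?r T \<subseteq> ?J" using H(3) by (auto simp: D_def)
  have IJ: "{v \<in> T. 1 \<le> length v \<and> length v < ?r} = ?J - D ?r T"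
    using H(1) by (force simp: D_def)
  have fJ: "finite ?J" using assms(2) by simp
  have "card (?J - D ?r T) = card ?J - card (D ?r T)" by (rule card_Diff_subset) (use DJ fJ finite_subset in auto)
  moreover have "card (D ?r T) \<le> card ?J" using DJ fJ by (rule card_mono[rotated])
  ultimately show "card {v \<in> T. 1 \<le> length v \<and> length v < height T} + card (D (height T) T) + 1 = card T"
    using IJ cJ by simp
  have "D ?r T \<noteq> {}" using H(2) by (auto simp: D_def)
  moreover have "finite (D ?r T)" using assms(2) by (simp add: D_def)
  ultimately show "1 \<le> card (D (height T) T)" by (simp add: Suc_le_eq card_gt_0_iff)
qed

lemma path_facts: assumes "is_tree T" "finite T" "i \<in> D (height T) T"
  shows "path_V i - {i} \<subseteq> {v \<in> T. 1 \<le> length v \<and> length v < height T}"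
    "card (path_V i - {i}) = height T - 1"
    "\<And>v. v \<in> path_V i - {i} \<Longrightarrow> 1 \<le> offspring T v"
    "i \<notin> {v \<in> T. 1 \<le> length v \<and> length v < height T}"
proof -
  let ?r = "height T"
  have iT: "i \<in> T" and li: "length i = ?r" using assms(3) by (auto simp: D_def)
  have P: "path_V i - {i} = (\<lambda>n. take n i) ` {1..<?r}"
  proof
    show "path_V i - {i} \<subseteq> (\<lambda>n. take n i) ` {1..<?r}"
    proof
      fix v assume "v \<in> path_V i - {i}"
      then obtain n where n: "v = take n i" "1 \<le> n" "n \<le> ?r" "v \<noteq> i"
        unfolding path_V_def using li by auto
      then have "n < ?r" using li by (cases "n = ?r") auto
      then show "v \<in> (\<lambda>n. take n i) ` {1..<?r}" using n by auto
    qed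
    show "(\<lambda>n. take n i) ` {1..<?r} \<subseteq> path_V i - {i}"
    proof
      fix v assume "v \<in> (\<lambda>n. take n i) ` {1..<?r}"
      then obtain n where n: "v = take n i" "1 \<le> n" "n < ?r" by auto
      then have "length v = n" using li by simp
      then have "v \<noteq> i" using n li by auto
      then show "v \<in> path_V i - {i}" unfolding path_V_def using n li by auto
    qed
  qed
  show "path_V i - {i} \<subseteq> {v \<in> T. 1 \<le> length v \<and> length v < ?r}"
    unfolding P using tree_take[OF assms(1) iT] li by auto
  have "inj_on (\<lambda>n. take n i) {1..<?r}"
    unfolding inj_on_def using li by (metis atLeastLessThan_iff length_take min.absorb4 order_less_imp_le min.absorb2)
  then show "card (path_V i - {i}) = ?r - 1" unfolding P by (simp add: card_image)
  show "1 \<le> offspring T v" if "v \<in> path_V i - {i}" for v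
  proof -
    have "v \<in> (\<lambda>n. take n i) ` {1..<?r}" using that P by simp
    then obtain n where n: "v = take n i" "n < ?r" by auto
    have "take (Suc n) i = v @ [i ! n]" using n li by (simp add: take_Suc_conv_app_nth)
    then have "i ! n \<in> {j. v @ [j] \<in> T}" using tree_take[OF assms(1) iT, of "Suc n"] by simp
    moreover have "finite {j. v @ [j] \<in> T}"
      using tree_fin_children[OF assms(1)] tree_take[OF assms(1) iT] n by simp
    ultimately show ?thesis unfolding offspring_def by (metis Suc_le_eq card_gt_0_iff empty_iff One_nat_def)
  qed
  show "i \<notin> {v \<in> T. 1 \<le> length v \<and> length v < ?r}" using li by simp
qed

lemma xpar_eq: assumes "\<mu> < 0" shows "xpar \<mu> = 1 / (1 + kpar \<mu>)" "1 < kpar \<mu>"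
proof -
  let ?k = "kpar \<mu>"
  show k1: "1 < ?k" using assms by (simp add: kpar_def)
  have d: "(1+?k) \<noteq> 0" "?k + 1 \<noteq> 0" using k1 by auto
  have "1 - 4 * gcrit \<mu> = ((1+?k)\<^sup>2 - 4*?k) / (1+?k)\<^sup>2" using d by (simp add: gcrit_def field_simps)
  also have "\<dots> = (?k-1)\<^sup>2 / (?k+1)\<^sup>2" by (simp add: power2_eq_square algebra_simps)
  finally have "1 - 4 * gcrit \<mu> = ((?k - 1) / (?k + 1))\<^sup>2" by (simp add: power_divide)
  then have "sqrt (1 - 4 * gcrit \<mu>) = (?k - 1) / (?k + 1)" using k1 by simp
  then show "xpar \<mu> = 1 / (1 + ?k)" using k1 unfolding xpar_def Xfun_def by (simp add: field_simps)
qed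


lemma identity: assumes "\<mu> < 0" "T \<in> fin_trees" "height T = r"
  shows "nu_ball \<mu> r T = kesten_ball \<mu> r T"
proof -
  have tr: "is_tree T" "finite T" using assms(2) by (auto simp: fin_trees_def)
  define k where "k = kpar \<mu>"
  define x where "x = xpar \<mu>"
  have k1: "1 < k" and xk: "x = 1 / (1 + k)" using xpar_eq[OF assms(1)] by (auto simp: k_def x_def)
  have x0: "x \<noteq> 0" "1 - x \<noteq> 0" using k1 xk by (auto simp: field_simps)
  have kx: "1 - x = k * x" using k1 xk by (simp add: field_simps)
  have pd: "pdist \<mu> n = x ^ n * (1 - x)" for n by (simp add: pdist_def x_def)
  have psd: "psdist \<mu> n = x ^ n * (1 - x)\<^sup>2" for n
    using x0 by (simp add: psdist_def pdist_def mpar_def x_def[symmetric] field_simps power2_eq_square)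
  have gc: "gcrit \<mu> = x * (1 - x)"
    using k1 unfolding gcrit_def k_def[symmetric] xk by (simp add: field_simps power2_eq_square)
  define I where "I = {v \<in> T. 1 \<le> length v \<and> length v < r}"
  define f where "f v = x ^ offspring T v * (1 - x)" for v
  define K where "K = card (D r T)"
  define c where "c = card I"
  have cI: "c + K + 1 = card T" "1 \<le> K" using card_I[OF tr] assms(3) by (auto simp: c_def K_def I_def)
  have so: "sum (offspring T) I = card T - 2" using sum_off[OF tr] assms(3) by (simp add: I_def)
  have fI: "finite I" using tr(2) by (simp add: I_def)
  have UI: "(\<Union>s\<in>{1..r-1}. D s T) = I"
  proof
    show "(\<Union>s\<in>{1..r-1}. D s T) \<subseteq> I" by (auto simp: D_def I_def)
    show "I \<subseteq> (\<Union>s\<in>{1..r-1}. D s T)"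
    proof
      fix v assume "v \<in> I"
      then show "v \<in> (\<Union>s\<in>{1..r-1}. D s T)" unfolding I_def D_def
        by (intro UN_I[of "length v"]) auto
    qed
  qed
  have prodI: "prod f I = x ^ (card T - 2) * (1 - x) ^ c"
    unfolding f_def prod.distrib power_sum[symmetric] so c_def by simp
  have trm: "(\<Prod>v\<in>(\<Union>s\<in>{1..r-1}. D s T) - path_V i. pdist \<mu> (deg T v - 1))
      * (\<Prod>v\<in>path_V i - {i}. psdist \<mu> (deg T v - 2)) = prod f I * k ^ (r - 1)"
    if i: "i \<in> D r T" for i
  proof -
    let ?P = "path_V i - {i}"
    note pf = path_facts[OF tr, unfolded assms(3), OF i]
    have PI: "?P \<subseteq> I" using pf(1) by (simp add: I_def)
    have e1: "I - path_V i = I - ?P" using pf(4) by (auto simp: I_def)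
    have a: "(\<Prod>v\<in>I - ?P. pdist \<mu> (deg T v - 1)) = prod f (I - ?P)"
      by (rule prod.cong) (auto simp: pd f_def deg_def)
    have b: "psdist \<mu> (deg T v - 2) = f v * k" if vP: "v \<in> ?P" for v
    proof -
      obtain m where m: "offspring T v = Suc m" using pf(3)[OF vP] by (cases "offspring T v") auto
      have "psdist \<mu> (deg T v - 2) = x ^ m * (1 - x)\<^sup>2" by (simp add: deg_def m psd)
      also have "\<dots> = x ^ m * (1 - x) * (k * x)" using kx by (simp add: power2_eq_square)
      also have "\<dots> = f v * k" by (simp add: f_def m)
      finally show ?thesis .
    qed
    have b2: "(\<Prod>v\<in>?P. psdist \<mu> (deg T v - 2)) = prod f ?P * k ^ (r - 1)"
      using b pf(2) assms(3) by (simp add: prod.distrib)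
    have "prod f I = prod f (I - ?P) * prod f ?P" by (rule prod.subset_diff[OF PI fI])
    then show ?thesis unfolding UI e1 a b2 by simp
  qed
  have "kesten_ball \<mu> r T = (\<Sum>i\<in>D r T. prod f I * k ^ (r - 1))"
    unfolding kesten_ball_def by (rule sum.cong[OF refl trm])
  also have "\<dots> = real K * (x ^ (card T - 2) * (1 - x) ^ c * k ^ (r - 1))"
    by (simp add: K_def prodI)
  finally have kb: "kesten_ball \<mu> r T = real K * (x ^ (card T - 2) * (1 - x) ^ c * k ^ (r - 1))" .
  have e2: "card T - 2 = c + (K - 1)" "tsize T - K = c" using cI by (auto simp: tsize_def)
  have nb: "nu_ball \<mu> r T = real K * k ^ (r - 1) * (x * (1 - x)) ^ c * x ^ (K - 1)"
    unfolding nu_ball_def Let_def K_def[symmetric] k_def[symmetric] gc e2 x_def[symmetric] ..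
  show ?thesis unfolding nb kb e2 by (simp add: power_add power_mult_distrib)
qed

theorem mainTheorem8:
  fixes \<mu> :: real and \<nu> lam :: "nat list set measure"
  assumes "\<mu> < 0"
    and "prob_space \<nu>" and "sets \<nu> = sets tree_space"
    and "\<And>T0 r. T0 \<in> fin_trees \<Longrightarrow> height T0 = r \<Longrightarrow>
           measure \<nu> (ball_tree r T0) = nu_ball \<mu> r T0"
    and "prob_space lam" and "sets lam = sets tree_space"
    and "\<And>T0 r. T0 \<in> fin_trees \<Longrightarrow> height T0 = r \<Longrightarrow>
           measure lam (ball_tree r T0) = kesten_ball \<mu> r T0"
  shows "\<nu> = lam"
proof -
  have ST: "sets tree_space = sigma_sets trees E0"
    unfolding tree_space_def sigma_eq[symmetric] G0_def
    by (rule sets_measure_of) (auto simp: ball_tree_def)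
  interpret P1: prob_space \<nu> by fact
  interpret P2: prob_space lam by fact
  show ?thesis
  proof (rule measure_eqI_generator_eq[OF E0_Int E0_Pow])
    fix X assume "X \<in> E0"
    then consider "X = {}" | T0 where "T0 \<in> fin_trees" "X = ball_tree (height T0) T0"
      unfolding E0_def by blast
    then show "emeasure \<nu> X = emeasure lam X"
    proof cases
      case 1 then show ?thesis by simp
    next
      case 2
      have "X \<in> sets \<nu>" "X \<in> sets lam" using 2 assms(3,6) ST
        by (auto simp: E0_def intro!: sigma_sets.Basic)
      then show ?thesis using 2 assms(4,7) identity[OF assms(1) 2(1) refl]
        by (simp add: P1.emeasure_eq_measure P2.emeasure_eq_measure)
    qed
  next
    show "sets \<nu> = sigma_sets trees E0" using assms(3) ST by simp
    show "sets lam = sigma_sets trees E0" using assms(6) ST by simp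
    show "range (\<lambda>_::nat. trees) \<subseteq> E0" using ball_trees fin01 unfolding E0_def by force
    show "(\<Union>i::nat. trees) = trees" by simp
    show "\<And>i::nat. emeasure \<nu> trees \<noteq> \<infinity>" by (simp add: P1.emeasure_eq_measure)
  qed
qed

end
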